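(* Suppose $\vec b,C$ are Hölder continuous and uniformly bounded, $C$ is uniformly strictly elliptic, and $F$ satisfies the condition in the context. Suppose $\rho_r=p_{\epsilon_r^2}$ and $\rho_\gamma=p_{\epsilon_\gamma^2}$ are centered Gaussian densities on $\mathbb R^d$ with covariances $\epsilon_r^2I$ and $\epsilon_\gamma^2I$. Let $\lambda=\sup_x\sup_{\|y\|=1}y^TC(x)y$. If $\epsilon_r^2+\frac{2\lambda}{\theta}<\epsilon_\gamma^2$, then there is $C<\infty$ such that for all $x\in\mathbb R^d$ and $\eta\in\mathcal M_F(\mathbb R^d)$, $$\Big|\theta\int(\rho_r*\eta(y)-\rho_r*\eta(x))q_\theta(x,dy)\Big|\le C\rho_\gamma*\eta(x)\quad\text{and}\quad\theta\int(\rho_r*\eta(y)-\rho_r*\eta(x))^2q_\theta(x,dy)\le C(\rho_\gamma*\eta(x))^2.$$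
   Context: $q_\theta(x,dy)$ is the Gaussian distribution with mean $x+\vec b(x)/\theta$ and covariance $C(x)/\theta$; $\rho*\eta(x)=\int\rho(x-y)\eta(dy)$ for finite measures $\eta$. Condition on $F:\mathbb R^d\times[0,\infty)\to\mathbb R$: locally Lipschitz in the second argument, bounded above, and $\sup_x\sup_{k\le m}|F(x,k)|<\infty$ for each $m$. *)

theory Defs
  imports "HOL-Analysis.Analysis"
begin

definition gauss_density :: "real^'n \<Rightarrow> real^'n^'n \<Rightarrow> real^'n \<Rightarrow> real" where
  "gauss_density m S y =
     (2 * pi) powr (- real CARD('n) / 2) / sqrt (det S)
     * exp (- (1/2) * ((y - m) \<bullet> (matrix_inv S *v (y - m))))"

definition p_gauss :: "real \<Rightarrow> real^'n \<Rightarrow> real" where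
  "p_gauss s z = (2 * pi * s) powr (- real CARD('n) / 2) * exp (- ((norm z)^2) / (2 * s))"

definition gauss_measure :: "real^'n \<Rightarrow> real^'n^'n \<Rightarrow> (real^'n) measure" where
  "gauss_measure m S = density lborel (\<lambda>y. ennreal (gauss_density m S y))"

definition q_kernel :: "(real^'n \<Rightarrow> real^'n) \<Rightarrow> (real^'n \<Rightarrow> real^'n^'n) \<Rightarrow> real
    \<Rightarrow> real^'n \<Rightarrow> (real^'n) measure" where
  "q_kernel b C \<theta> x = gauss_measure (x + (1/\<theta>) *\<^sub>R b x) ((1/\<theta>) *\<^sub>R C x)"

definition conv_meas :: "(real^'n \<Rightarrow> real) \<Rightarrow> (real^'n) measure \<Rightarrow> real^'n \<Rightarrow> real" where
  "conv_meas \<rho> \<eta> x = (\<integral>y. \<rho> (x - y) \<partial>\<eta>)"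

definition holder_continuous :: "('a::metric_space \<Rightarrow> 'b::real_normed_vector) \<Rightarrow> bool" where
  "holder_continuous f \<longleftrightarrow> (\<exists>\<alpha> K. 0 < \<alpha> \<and> \<alpha> \<le> 1 \<and>
      (\<forall>x y. norm (f x - f y) \<le> K * dist x y powr \<alpha>))"

definition F_condition :: "(real^'n \<Rightarrow> real \<Rightarrow> real) \<Rightarrow> bool" where
  "F_condition F \<longleftrightarrow>
     (\<forall>m. \<exists>L. \<forall>x k k'. 0 \<le> k \<and> k \<le> m \<and> 0 \<le> k' \<and> k' \<le> m \<longrightarrow>
          \<bar>F x k - F x k'\<bar> \<le> L * \<bar>k - k'\<bar>)
     \<and> (\<exists>U. \<forall>x k. 0 \<le> k \<longrightarrow> F x k \<le> U)
     \<and> (\<forall>m. \<exists>B. \<forall>x k. 0 \<le> k \<and> k \<le> m \<longrightarrow> \<bar>F x k\<bar> \<le> B)"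

end

theory Submission imports Defs "HOL-Probability.Probability" begin

lemma sq_split:
  fixes p q :: "'a::real_normed_vector"
  assumes "0 < a" "a < 1"
  shows "(norm (p + q))^2 \<le> (norm p)^2 / a + (norm q)^2 / (1 - a)"
proof -
  define P where "P = norm p"
  define Q where "Q = norm q"
  have P0: "P \<ge> 0" "Q \<ge> 0" unfolding P_def Q_def by auto
  have "norm (p + q) \<le> P + Q" unfolding P_def Q_def by (rule norm_triangle_ineq)
  hence "(norm (p + q))^2 \<le> (P + Q)^2" by (simp add: power_mono)
  also have "(P + Q)^2 \<le> P^2 / a + Q^2 / (1 - a)"
  proof -
    have "a * (1 - a) * (P + Q)^2 \<le> (1 - a) * P^2 + a * Q^2"
    proof -
      have "(1 - a) * P^2 + a * Q^2 - a * (1 - a) * (P + Q)^2 = ((1 - a) * P - a * Q)^2"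
        by (simp add: power2_eq_square algebra_simps)
      moreover have "((1 - a) * P - a * Q)^2 \<ge> 0" by simp
      ultimately show ?thesis by linarith
    qed
    hence "(P + Q)^2 \<le> ((1 - a) * P^2 + a * Q^2) / (a * (1 - a))"
      using assms by (simp add: field_simps)
    also have "\<dots> = P^2 / a + Q^2 / (1 - a)" using assms by (simp add: field_simps)
    finally show ?thesis .
  qed
  finally show ?thesis unfolding P_def Q_def .
qed

lemma mv_bound:
  fixes A :: "real^'n^'m"
  shows "norm (A *v x) \<le> real CARD('m) * real CARD('n) * norm A * norm x"
proof -
  have "norm (A *v x) \<le> onorm ((*v) A) * norm x"
    by (rule onorm[OF matrix_vector_mul_bounded_linear])
  also have "onorm ((*v) A) \<le> real CARD('m) * real CARD('n) * norm A"
    by (rule onorm_le_matrix_component) (rule order_trans[OF component_le_norm_cart Finite_Cartesian_Product.norm_nth_le])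
  finally show ?thesis by (simp add: mult_right_mono)
qed

lemma inner_sym:
  fixes S :: "real^'n^'n"
  assumes "transpose S = S"
  shows "v \<bullet> (S *v w) = (S *v v) \<bullet> w"
  by (metis assms dot_lmul_matrix transpose_matrix_vector)

lemma mv_scale: "(S::real^'n^'n) *v (t *\<^sub>R w) = t *\<^sub>R (S *v w)"
  by (simp add: matrix_vector_mult_def vec_eq_iff sum_distrib_left algebra_simps)

lemma cs_form:
  fixes S :: "real^'n^'n"
  assumes sym: "transpose S = S" and psd: "\<And>y. 0 \<le> y \<bullet> (S *v y)"
  shows "(a \<bullet> (S *v b))^2 \<le> (a \<bullet> (S *v a)) * (b \<bullet> (S *v b))"
proof -
  define P where "P = a \<bullet> (S *v a)"
  define Q where "Q = b \<bullet> (S *v b)"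
  define R where "R = a \<bullet> (S *v b)"
  have key: "0 \<le> P + 2 * t * R + t^2 * Q" for t
  proof -
    have "0 \<le> (a + t *\<^sub>R b) \<bullet> (S *v (a + t *\<^sub>R b))" by (rule psd)
    also have "\<dots> = P + 2 * t * R + t^2 * Q"
      using inner_sym[OF sym, of b a]
      by (simp add: matrix_vector_right_distrib mv_scale inner_add_left inner_add_right
          P_def Q_def R_def power2_eq_square algebra_simps inner_commute)
    finally show ?thesis .
  qed
  have Q0: "Q \<ge> 0" unfolding Q_def by (rule psd)
  show ?thesis
  proof (cases "Q = 0")
    case True
    have "R = 0"
    proof (rule ccontr)
      assume "R \<noteq> 0"
      have "0 \<le> P + 2 * (-(P+1)/(2*R)) * R + (-(P+1)/(2*R))^2 * Q" by (rule key)
      with True \<open>R \<noteq> 0\<close> show False by (simp add: field_simps)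
    qed
    then show ?thesis using True by (simp add: R_def[symmetric] P_def[symmetric] Q_def[symmetric])
  next
    case False
    with Q0 have Qp: "Q > 0" by simp
    have "0 \<le> P + 2 * (-R/Q) * R + (-R/Q)^2 * Q" by (rule key)
    hence "0 \<le> P - R^2 / Q" using Qp by (simp add: field_simps power2_eq_square)
    hence "R^2 \<le> P * Q" using Qp by (simp add: field_simps)
    then show ?thesis by (simp add: R_def P_def Q_def)
  qed
qed

lemma inv_right: "invertible (S::real^'n^'n) \<Longrightarrow> S *v (matrix_inv S *v u) = u"
proof -
  assume "invertible S"
  then have "\<exists>A'. S ** A' = mat 1 \<and> A' ** S = mat 1" unfolding invertible_def .
  then have "S ** matrix_inv S = mat 1" unfolding matrix_inv_def by (rule someI_ex[THEN conjunct1])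
  then show ?thesis by (metis matrix_vector_mul_assoc matrix_vector_mul_lid)
qed

lemma inv_quad:
  fixes S :: "real^'n^'n"
  assumes sym: "transpose S = S" and psd: "\<And>y. 0 \<le> y \<bullet> (S *v y)"
    and upper: "\<And>y. y \<bullet> (S *v y) \<le> L * (norm y)^2" and inv: "invertible S"
  shows "(norm u)^2 \<le> L * (u \<bullet> (matrix_inv S *v u))"
proof -
  define v where "v = matrix_inv S *v u"
  have Sv: "S *v v = u" unfolding v_def by (rule inv_right[OF inv])
  have eq: "u \<bullet> (matrix_inv S *v u) = v \<bullet> (S *v v)"
    by (simp add: Sv v_def[symmetric] inner_commute)
  have "(v \<bullet> (S *v u))^2 \<le> (v \<bullet> (S *v v)) * (u \<bullet> (S *v u))"
    by (rule cs_form[OF sym psd])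
  moreover have "v \<bullet> (S *v u) = (norm u)^2"
    using inner_sym[OF sym, of v u] Sv by (simp add: power2_norm_eq_inner)
  moreover have "(v \<bullet> (S *v v)) * (u \<bullet> (S *v u)) \<le> (v \<bullet> (S *v v)) * (L * (norm u)^2)"
    by (rule mult_left_mono[OF upper psd])
  ultimately have "((norm u)^2)^2 \<le> (v \<bullet> (S *v v)) * L * (norm u)^2" by (simp add: ac_simps)
  then have "(norm u)^2 \<le> L * (v \<bullet> (S *v v)) \<or> norm u = 0"
    by (cases "norm u = 0") (auto simp: power2_eq_square ac_simps)
  moreover have "norm u = 0 \<Longrightarrow> 0 \<le> L * (v \<bullet> (S *v v))"
    using Sv by simp
  ultimately show ?thesis using eq by auto
qed


lemma det_cont: "continuous_on S (det :: real^'n^'n \<Rightarrow> real)"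
  unfolding det_def[abs_def]
  by (intro continuous_intros continuous_on_compose2[OF linear_continuous_on[OF bounded_linear_vec_nth]]) auto

lemma quad_cont: "continuous_on S (\<lambda>M::real^'n^'n. y \<bullet> (M *v y))"
  unfolding inner_vec_def matrix_vector_mult_def
  by (intro continuous_intros continuous_on_compose2[OF linear_continuous_on[OF bounded_linear_vec_nth]]) auto

lemma mscale_mv: "((t::real) *\<^sub>R (A::real^'n^'n)) *v y = t *\<^sub>R (A *v y)"
  by (simp add: matrix_vector_mult_def vec_eq_iff sum_distrib_left algebra_simps)

lemma ell_det_nz:
  fixes M :: "real^'n^'n"
  assumes c: "c > 0" and ell: "\<And>y. c * (norm y)^2 \<le> y \<bullet> (M *v y)"
  shows "det M \<noteq> 0"
proof -
  have "\<forall>y. M *v y = 0 \<longrightarrow> y = 0"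
  proof (intro allI impI)
    fix y assume "M *v y = 0"
    with ell[of y] have "c * (norm y)^2 \<le> 0" by simp
    with c have "(norm y)^2 \<le> 0" by (simp add: mult_le_0_iff)
    then show "y = 0" by simp
  qed
  then have "invertible M" unfolding invertible_left_inverse matrix_left_invertible_ker .
  then show ?thesis by (simp add: invertible_det_nz)
qed

lemma ell_det_pos:
  fixes M :: "real^'n^'n"
  assumes c: "c > 0" and ell: "\<And>y. c * (norm y)^2 \<le> y \<bullet> (M *v y)"
  shows "det M > 0"
proof (rule ccontr)
  assume "\<not> det M > 0"
  define P where "P t = (1 - t) *\<^sub>R mat 1 + t *\<^sub>R M" for t :: real
  define h where "h t = det (P t)" for t
  have "continuous_on {0..1} h"
    unfolding h_def[abs_def] P_def
    by (rule continuous_on_compose2[OF det_cont[of UNIV]]) (auto intro!: continuous_intros)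
  moreover have "h 1 \<le> 0" "0 \<le> h 0" using \<open>\<not> det M > 0\<close> by (auto simp: h_def P_def)
  ultimately obtain t where t: "0 \<le> t" "t \<le> 1" "h t = 0"
    using IVT2'[of h 1 0 0] by auto
  have "det (P t) \<noteq> 0"
  proof (rule ell_det_nz[of "min 1 c"])
    show "min 1 c > 0" using c by simp
    fix y :: "real^'n"
    have "y \<bullet> (P t *v y) = (1 - t) * (norm y)^2 + t * (y \<bullet> (M *v y))"
      by (simp add: P_def matrix_vector_mult_add_rdistrib mscale_mv power2_norm_eq_inner inner_add_right)
    also have "\<dots> \<ge> (1 - t) * (min 1 c * (norm y)^2) + t * (min 1 c * (norm y)^2)"
    proof -
      have m1: "min 1 c * (norm y)^2 \<le> (norm y)^2"
        using mult_right_mono[OF min.cobounded1[of 1 c], of "(norm y)^2"] by simp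
      have m2: "min 1 c * (norm y)^2 \<le> y \<bullet> (M *v y)"
        using order_trans[OF mult_right_mono[OF min.cobounded2[of 1 c]] ell[of y]] by simp
      show ?thesis using t by (intro add_mono mult_left_mono m1 m2) auto
    qed
    finally show "min 1 c * (norm y)^2 \<le> y \<bullet> (P t *v y)" by (simp add: algebra_simps)
  qed
  with t show False by (simp add: h_def)
qed

lemma det_lower:
  fixes c B :: real
  assumes c: "c > 0"
  shows "\<exists>\<delta>>0. \<forall>M::real^'n^'n. (\<forall>y. c * (norm y)^2 \<le> y \<bullet> (M *v y)) \<and> norm M \<le> B \<longrightarrow> \<delta> \<le> det M"
proof -
  define K where "K = {M::real^'n^'n. (\<forall>y. c * (norm y)^2 \<le> y \<bullet> (M *v y)) \<and> norm M \<le> B}"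
  show ?thesis
  proof (cases "K = {}")
    case True
    then show ?thesis by (intro exI[of _ 1]) (auto simp: K_def)
  next
    case False
    have "K = (\<Inter>y. {M. c * (norm y)^2 \<le> y \<bullet> (M *v y)}) \<inter> cball 0 B"
      unfolding K_def by auto
    moreover have "closed {M::real^'n^'n. c * (norm y)^2 \<le> y \<bullet> (M *v y)}" for y
      by (rule closed_Collect_le) (auto intro: quad_cont continuous_intros)
    ultimately have "closed K" by auto
    moreover have "bounded K" unfolding K_def by (rule bounded_subset[OF bounded_cball[of 0 B]]) auto
    ultimately have "compact K" by (simp add: compact_eq_bounded_closed)
    then obtain M0 where M0: "M0 \<in> K" "\<forall>M\<in>K. det M0 \<le> det M"
      using continuous_attains_inf[OF _ False det_cont] by blast
    have "det M0 > 0" using M0(1) by (intro ell_det_pos[OF c]) (auto simp: K_def)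
    then show ?thesis using M0 by (auto simp: K_def)
  qed
qed

lemma gauss1_integrable:
  assumes g: "\<gamma> > 0"
  shows "integrable lborel (\<lambda>t::real. exp (- \<gamma> * t^2))"
proof -
  define \<sigma> where "\<sigma> = sqrt (1 / (2 * \<gamma>))"
  have s2: "\<sigma>^2 = 1 / (2 * \<gamma>)" using g by (simp add: \<sigma>_def)
  have sp: "\<sigma> > 0" using g by (simp add: \<sigma>_def)
  have "exp (- \<gamma> * t^2) = sqrt (2 * pi * \<sigma>^2) * normal_density 0 \<sigma> t" for t
    using g sp by (simp add: normal_density_def s2 field_simps)
  then have eq: "(\<lambda>t. exp (- \<gamma> * t^2)) = (\<lambda>t. sqrt (2 * pi * \<sigma>^2) * normal_density 0 \<sigma> t)"
    by (rule ext)
  have "integrable lborel (\<lambda>t. sqrt (2 * pi * \<sigma>^2) * normal_density 0 \<sigma> t)"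
    by (intro integrable_mult_right integrable_normal_density) (simp add: sp)
  then show ?thesis by (simp only: eq)
qed

lemma gauss_integrable0:
  assumes g: "\<gamma> > 0"
  shows "integrable lborel (\<lambda>y::'a::euclidean_space. exp (- \<gamma> * (norm y)^2))"
proof (subst integrable_iff_bounded, intro conjI)
  show "(\<lambda>y::'a. exp (- \<gamma> * (norm y)^2)) \<in> borel_measurable lborel" by measurable
  have eq: "ennreal (norm (exp (- \<gamma> * (norm y)^2))) = (\<Prod>b\<in>Basis. ennreal (exp (- \<gamma> * (y \<bullet> b)^2)))" for y :: 'a
  proof -
    have "(norm y)^2 = y \<bullet> y" by (rule power2_norm_eq_inner)
    also have "\<dots> = (\<Sum>b\<in>Basis. (y \<bullet> b) * (y \<bullet> b))" by (rule euclidean_inner)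
    also have "\<dots> = (\<Sum>b\<in>Basis. (y \<bullet> b)^2)" by (simp add: power2_eq_square)
    finally have "(norm y)^2 = (\<Sum>b\<in>Basis. (y \<bullet> b)^2)" .
    then have "exp (- \<gamma> * (norm y)^2) = (\<Prod>b\<in>Basis. exp (- \<gamma> * (y \<bullet> b)^2))"
      by (simp add: sum_distrib_left exp_sum)
    then show ?thesis by (simp add: prod_ennreal abs_of_nonneg prod_nonneg)
  qed
  have "(\<integral>\<^sup>+y. ennreal (norm (exp (- \<gamma> * (norm y)^2))) \<partial>(lborel::'a measure))
      = (\<Prod>b\<in>(Basis::'a set). (\<integral>\<^sup>+t. ennreal (exp (- \<gamma> * t^2)) \<partial>lborel))"
    unfolding eq by (rule nn_integral_lborel_prod) auto
  also have "\<dots> < \<infinity>"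
    using gauss1_integrable[OF g]
    by (simp add: less_top[symmetric] ennreal_prod_eq_top integrable_iff_bounded power_eq_top_ennreal)
  finally show "(\<integral>\<^sup>+y. ennreal (norm (exp (- \<gamma> * (norm y)^2))) \<partial>(lborel::'a measure)) < \<infinity>" .
qed

lemma gauss_integrable:
  assumes g: "\<gamma> > 0"
  shows "integrable lborel (\<lambda>y::'a::euclidean_space. exp (- \<gamma> * (norm (y - m))^2))"
    and "(\<integral>y. exp (- \<gamma> * (norm (y - m))^2) \<partial>lborel) = (\<integral>y. exp (- \<gamma> * (norm y)^2) \<partial>(lborel::'a measure))"
proof -
  let ?f = "\<lambda>y::'a. exp (- \<gamma> * (norm y)^2)"
  have m: "((+) (- m)) \<in> measurable lborel (borel::'a measure)" by measurable
  have fm: "?f \<in> borel_measurable borel" by measurable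
  have "integrable (distr lborel borel ((+) (- m))) ?f"
    using gauss_integrable0[OF g] by (simp add: lborel_distr_plus)
  then show "integrable lborel (\<lambda>y::'a. exp (- \<gamma> * (norm (y - m))^2))"
    by (subst (asm) integrable_distr_eq[OF m fm]) (simp add: add.commute)
  have "(\<integral>y. ?f y \<partial>(lborel::'a measure)) = (\<integral>y. ?f y \<partial>(distr lborel borel ((+) (- m))))"
    by (simp add: lborel_distr_plus)
  also have "\<dots> = (\<integral>y. exp (- \<gamma> * (norm (y - m))^2) \<partial>lborel)"
    by (subst integral_distr[OF m fm]) (simp add: add.commute)
  finally show "(\<integral>y. exp (- \<gamma> * (norm (y - m))^2) \<partial>lborel) = (\<integral>y. ?f y \<partial>(lborel::'a measure))" ..
qed


lemma gd_meas: "gauss_density m S \<in> borel_measurable borel"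
  unfolding gauss_density_def[abs_def]
  by (intro borel_measurable_continuous_onI continuous_intros
      continuous_on_compose2[OF linear_continuous_on[OF matrix_vector_mul_bounded_linear]]) auto

lemma pg_meas: "(\<lambda>z. p_gauss s (x - z)) \<in> borel_measurable borel"
  unfolding p_gauss_def by measurable

lemma gd_bound:
  fixes S :: "real^'n^'n"
  assumes sym: "transpose S = S" and psd: "\<And>y. 0 \<le> y \<bullet> (S *v y)"
    and upper: "\<And>y. y \<bullet> (S *v y) \<le> L * (norm y)^2" and L: "L > 0"
    and inv: "invertible S" and d: "\<delta> > 0" "\<delta> \<le> det S"
  shows "0 \<le> gauss_density m S y"
    and "gauss_density m S y \<le> (2 * pi) powr (- real CARD('n) / 2) / sqrt \<delta> * exp (- ((norm (y - m))^2) / (2 * L))"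
proof -
  have dS: "det S > 0" using d by linarith
  show "0 \<le> gauss_density m S y" unfolding gauss_density_def using dS by simp
  have q: "(norm (y - m))^2 \<le> L * ((y - m) \<bullet> (matrix_inv S *v (y - m)))"
    by (rule inv_quad[OF sym psd upper inv])
  have e: "exp (- (1/2) * ((y - m) \<bullet> (matrix_inv S *v (y - m)))) \<le> exp (- ((norm (y - m))^2) / (2 * L))"
    using q L by (simp add: field_simps)
  have s: "1 / sqrt (det S) \<le> 1 / sqrt \<delta>"
    using d by (intro divide_left_mono) auto
  have "gauss_density m S y = (2 * pi) powr (- real CARD('n) / 2) * (1 / sqrt (det S))
        * exp (- (1/2) * ((y - m) \<bullet> (matrix_inv S *v (y - m))))"
    unfolding gauss_density_def by simp
  also have "\<dots> \<le> (2 * pi) powr (- real CARD('n) / 2) * (1 / sqrt \<delta>) * exp (- ((norm (y - m))^2) / (2 * L))"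
    using dS d(1) by (intro mult_mono e s mult_left_mono) auto
  finally show "gauss_density m S y \<le> (2 * pi) powr (- real CARD('n) / 2) / sqrt \<delta> * exp (- ((norm (y - m))^2) / (2 * L))"
    by simp
qed

lemma pg_pointwise:
  fixes x y z :: "real^'n"
  assumes sr: "0 < sr" and srg: "sr < sg"
  shows "p_gauss sr (y - z) \<le> ((2 * pi * sr) powr (- real CARD('n) / 2) / (2 * pi * sg) powr (- real CARD('n) / 2))
           * exp ((norm (y - x))^2 / (2 * (sg - sr))) * p_gauss sg (x - z)"
proof -
  define u where "u = x - z"
  define v where "v = y - x"
  have yz: "y - z = u + v" unfolding u_def v_def by simp
  have a: "0 < sr / sg" "sr / sg < 1" using sr srg by auto
  have "(norm ((u + v) + (- v)))^2 \<le> (norm (u + v))^2 / (sr / sg) + (norm (- v))^2 / (1 - sr / sg)"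
    by (rule sq_split[OF a])
  hence "(norm u)^2 \<le> sg * (norm (u + v))^2 / sr + sg * (norm v)^2 / (sg - sr)"
    using sr srg by (simp add: field_simps)
  hence ineq: "- ((norm (u + v))^2) / (2 * sr) \<le> (norm v)^2 / (2 * (sg - sr)) - (norm u)^2 / (2 * sg)"
    using sr srg by (simp add: field_simps)
  define cr where "cr = (2 * pi * sr) powr (- real CARD('n) / 2)"
  define cg where "cg = (2 * pi * sg) powr (- real CARD('n) / 2)"
  have cg: "cg > 0" using sr srg by (simp add: cg_def)
  have "p_gauss sr (y - z) = cr * exp (- ((norm (u + v))^2) / (2 * sr))"
    unfolding p_gauss_def cr_def yz by simp
  also have "\<dots> \<le> cr * exp ((norm v)^2 / (2 * (sg - sr)) - (norm u)^2 / (2 * sg))"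
    by (intro mult_left_mono) (use ineq in \<open>auto simp: cr_def\<close>)
  also have "\<dots> = (cr / cg) * exp ((norm v)^2 / (2 * (sg - sr))) * (cg * exp (- ((norm u)^2) / (2 * sg)))"
    using cg by (simp add: exp_diff field_simps exp_minus)
  also have "\<dots> = (cr / cg) * exp ((norm (y - x))^2 / (2 * (sg - sr))) * p_gauss sg (x - z)"
    unfolding p_gauss_def cg_def u_def v_def by simp
  finally show ?thesis unfolding cr_def cg_def .
qed

lemma pg_integrable:
  fixes x :: "real^'n"
  assumes fin: "finite_measure \<eta>" and sets: "sets \<eta> = sets borel" and s: "s > 0"
  shows "integrable \<eta> (\<lambda>z. p_gauss s (x - z))"
proof (rule finite_measure.integrable_const_bound[OF fin])
  show "(\<lambda>z. p_gauss s (x - z)) \<in> borel_measurable \<eta>"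
    using pg_meas measurable_cong_sets[OF sets refl] by blast
  show "AE z in \<eta>. norm (p_gauss s (x - z)) \<le> (2 * pi * s) powr (- real CARD('n) / 2)"
  proof (rule AE_I2)
    fix z :: "real^'n"
    have "(2 * pi * s) powr (- real CARD('n) / 2) * exp (- ((norm (x - z))^2) / (2 * s))
          \<le> (2 * pi * s) powr (- real CARD('n) / 2)"
      using s by (intro mult_left_le) auto
    then show "norm (p_gauss s (x - z)) \<le> (2 * pi * s) powr (- real CARD('n) / 2)"
      by (simp add: p_gauss_def)
  qed
qed

lemma pg_nonneg: "s > 0 \<Longrightarrow> 0 \<le> p_gauss s z"
  by (simp add: p_gauss_def)

lemma conv_bound:
  fixes x y :: "real^'n"
  assumes fin: "finite_measure \<eta>" and sets: "sets \<eta> = sets borel"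
    and sr: "0 < sr" and srg: "sr < sg"
  shows "0 \<le> conv_meas (p_gauss sr) \<eta> y"
    and "conv_meas (p_gauss sr) \<eta> y \<le> ((2 * pi * sr) powr (- real CARD('n) / 2) / (2 * pi * sg) powr (- real CARD('n) / 2))
           * exp ((norm (y - x))^2 / (2 * (sg - sr))) * conv_meas (p_gauss sg) \<eta> x"
proof -
  show "0 \<le> conv_meas (p_gauss sr) \<eta> y"
    unfolding conv_meas_def using sr by (intro integral_nonneg_AE) (auto simp: pg_nonneg)
  define D where "D = ((2 * pi * sr) powr (- real CARD('n) / 2) / (2 * pi * sg) powr (- real CARD('n) / 2))
           * exp ((norm (y - x))^2 / (2 * (sg - sr)))"
  have D: "D \<ge> 0" unfolding D_def by simp
  have sg: "sg > 0" using sr srg by simp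
  have "conv_meas (p_gauss sr) \<eta> y \<le> (\<integral>z. D * p_gauss sg (x - z) \<partial>\<eta>)"
    unfolding conv_meas_def
  proof (rule integral_mono_AE')
    show "integrable \<eta> (\<lambda>z. D * p_gauss sg (x - z))"
      by (intro integrable_mult_right pg_integrable[OF fin sets sg])
    show "AE z in \<eta>. p_gauss sr (y - z) \<le> D * p_gauss sg (x - z)"
    proof (rule AE_I2)
      fix z show "p_gauss sr (y - z) \<le> D * p_gauss sg (x - z)"
        using pg_pointwise[OF sr srg, of y z x] by (simp add: D_def)
    qed
    show "AE z in \<eta>. 0 \<le> D * p_gauss sg (x - z)"
      using D sg by (simp add: pg_nonneg)
  qed
  also have "\<dots> = D * conv_meas (p_gauss sg) \<eta> x"
    unfolding conv_meas_def by simp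
  finally show "conv_meas (p_gauss sr) \<eta> y \<le> ((2 * pi * sr) powr (- real CARD('n) / 2) / (2 * pi * sg) powr (- real CARD('n) / 2))
           * exp ((norm (y - x))^2 / (2 * (sg - sr))) * conv_meas (p_gauss sg) \<eta> x"
    unfolding D_def .
qed


theorem mainTheorem14:
  fixes b :: "real^'n \<Rightarrow> real^'n"
    and C :: "real^'n \<Rightarrow> real^'n^'n"
    and F :: "real^'n \<Rightarrow> real \<Rightarrow> real"
    and \<theta> eps_r eps_g :: real
  assumes b_holder: "holder_continuous b"
    and C_holder: "holder_continuous C"
    and bounded: "\<exists>B. \<forall>x. norm (b x) \<le> B \<and> norm (C x) \<le> B"
    and C_sym: "\<forall>x. transpose (C x) = C x"
    and C_elliptic: "\<exists>c>0. \<forall>x y. c * (norm y)^2 \<le> y \<bullet> (C x *v y)"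
    and F_cond: "F_condition F"
    and theta_pos: "\<theta> > 0"
    and eps_r_pos: "eps_r > 0" and eps_g_pos: "eps_g > 0"
    and ineq: "eps_r^2 + 2 * (SUP x. SUP y\<in>{y. norm y = 1}. y \<bullet> (C x *v y)) / \<theta> < eps_g^2"
  shows "\<exists>K::real. \<forall>x (\<eta>::(real^'n) measure).
           finite_measure \<eta> \<and> sets \<eta> = sets borel \<longrightarrow>
           \<bar>\<theta> * (\<integral>y. conv_meas (p_gauss (eps_r^2)) \<eta> y - conv_meas (p_gauss (eps_r^2)) \<eta> x
                     \<partial>(q_kernel b C \<theta> x))\<bar>
              \<le> K * conv_meas (p_gauss (eps_g^2)) \<eta> x
         \<and> \<theta> * (\<integral>y. (conv_meas (p_gauss (eps_r^2)) \<eta> y - conv_meas (p_gauss (eps_r^2)) \<eta> x)^2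
                     \<partial>(q_kernel b C \<theta> x))
              \<le> K * (conv_meas (p_gauss (eps_g^2)) \<eta> x)^2"
proof -
  obtain B where B: "\<And>x. norm (b x) \<le> B" "\<And>x. norm (C x) \<le> B" using bounded by blast
  obtain c where c: "c > 0" and ell: "\<And>x y. c * (norm y)^2 \<le> y \<bullet> (C x *v y)"
    using C_elliptic by blast
  define U where "U = {y::real^'n. norm y = 1}"
  define \<Lambda> where "\<Lambda> = (SUP x. SUP y\<in>U. y \<bullet> (C x *v y))"
  define w0 :: "real^'n" where "w0 = axis undefined 1"
  have w0U: "w0 \<in> U" by (simp add: U_def w0_def norm_axis_1)
  then have U_ne: "U \<noteq> {}" by blast
  have unit_bd: "y \<bullet> (C x *v y) \<le> real CARD('n) * real CARD('n) * B" if "y \<in> U" for x y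
  proof -
    have "y \<bullet> (C x *v y) \<le> norm y * norm (C x *v y)" by (rule norm_cauchy_schwarz)
    also have "\<dots> = norm (C x *v y)" using that by (simp add: U_def)
    also have "\<dots> \<le> real CARD('n) * real CARD('n) * norm (C x) * norm y" by (rule mv_bound)
    also have "\<dots> \<le> real CARD('n) * real CARD('n) * B"
      using that B(2)[of x] by (simp add: U_def)
    finally show ?thesis .
  qed
  have bddU: "bdd_above ((\<lambda>y. y \<bullet> (C x *v y)) ` U)" for x
    using unit_bd by (intro bdd_aboveI2) blast
  have s_le: "(SUP y\<in>U. y \<bullet> (C x *v y)) \<le> real CARD('n) * real CARD('n) * B" for x
    using U_ne unit_bd by (intro cSUP_least) auto
  have bddX: "bdd_above (range (\<lambda>x. SUP y\<in>U. y \<bullet> (C x *v y)))"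
    using s_le by (intro bdd_aboveI2) blast
  have unit_le: "y \<bullet> (C x *v y) \<le> \<Lambda>" if "y \<in> U" for x y
    unfolding \<Lambda>_def
    by (rule order_trans[OF cSUP_upper[OF that bddU] cSUP_upper[OF UNIV_I bddX]])
  have quad_le: "u \<bullet> (C x *v u) \<le> \<Lambda> * (norm u)^2" for x u
  proof (cases "u = 0")
    case True then show ?thesis by simp
  next
    case False
    define w where "w = (1 / norm u) *\<^sub>R u"
    have wU: "w \<in> U" using False by (simp add: U_def w_def)
    have u: "u = norm u *\<^sub>R w" using False by (simp add: w_def)
    have "u \<bullet> (C x *v u) = (norm u)^2 * (w \<bullet> (C x *v w))"
      by (subst (1 2) u) (simp add: mv_scale power2_eq_square)
    also have "\<dots> \<le> (norm u)^2 * \<Lambda>"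
      by (intro mult_left_mono unit_le wU) auto
    finally show ?thesis by (simp add: mult.commute)
  qed
  have \<Lambda>pos: "\<Lambda> > 0"
  proof -
    have "c * (norm w0)^2 \<le> w0 \<bullet> (C undefined *v w0)" by (rule ell)
    also have "\<dots> \<le> \<Lambda>" by (rule unit_le[OF w0U])
    finally show ?thesis using c w0U by (simp add: U_def)
  qed
  have ineq': "eps_r^2 + 2 * \<Lambda> / \<theta> < eps_g^2" using ineq by (simp add: \<Lambda>_def U_def)
  have sr: "eps_r^2 > 0" using eps_r_pos by simp
  have srg: "eps_r^2 < eps_g^2"
    using ineq' \<Lambda>pos theta_pos by (smt (verit) divide_pos_pos)
  define \<alpha> where "\<alpha> = 1 / (eps_g^2 - eps_r^2)"
  define \<beta> where "\<beta> = \<theta> / (2 * \<Lambda>)"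
  have \<alpha>pos: "\<alpha> > 0" using srg by (simp add: \<alpha>_def)
  have \<alpha>\<beta>: "\<alpha> < \<beta>"
  proof -
    have "2 * \<Lambda> / \<theta> < eps_g^2 - eps_r^2" using ineq' by simp
    then have "2 * \<Lambda> < \<theta> * (eps_g^2 - eps_r^2)" using theta_pos by (simp add: field_simps)
    then show ?thesis using srg \<Lambda>pos theta_pos by (simp add: \<alpha>_def \<beta>_def field_simps)
  qed
  define S where "S x = (1/\<theta>) *\<^sub>R C x" for x
  define m where "m x = x + (1/\<theta>) *\<^sub>R b x" for x
  have S_sym: "transpose (S x) = S x" for x
    using C_sym by (simp add: S_def transpose_scalar)
  have S_quad: "y \<bullet> (S x *v y) = (1/\<theta>) * (y \<bullet> (C x *v y))" for x y
    by (simp add: S_def mscale_mv)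
  have S_ell: "(c/\<theta>) * (norm y)^2 \<le> y \<bullet> (S x *v y)" for x y
    using ell[of y x] theta_pos by (simp add: S_quad divide_right_mono)
  have S_psd: "0 \<le> y \<bullet> (S x *v y)" for x y
    using S_ell[of y x] c theta_pos by (smt (verit) divide_pos_pos mult_nonneg_nonneg zero_le_power2)
  have S_up: "y \<bullet> (S x *v y) \<le> (\<Lambda>/\<theta>) * (norm y)^2" for x y
    using quad_le[of y x] theta_pos by (simp add: S_quad divide_right_mono)
  have S_norm: "norm (S x) \<le> B/\<theta>" for x
    using B(2)[of x] theta_pos by (simp add: S_def divide_right_mono)
  have cpos: "c/\<theta> > 0" using c theta_pos by simp
  have S_inv: "invertible (S x)" for x
    using ell_det_nz[OF cpos S_ell] by (simp add: invertible_det_nz)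
  obtain \<delta> where \<delta>: "\<delta> > 0" and \<delta>le: "\<And>M::real^'n^'n. (\<forall>y. (c/\<theta>) * (norm y)^2 \<le> y \<bullet> (M *v y)) \<and> norm M \<le> B/\<theta> \<Longrightarrow> \<delta> \<le> det M"
    using det_lower[OF cpos, of "B/\<theta>"] by blast
  have \<delta>S: "\<delta> \<le> det (S x)" for x using S_ell S_norm by (intro \<delta>le) auto
  define A where "A = (2 * pi) powr (- real CARD('n) / 2) / sqrt \<delta>"
  have A: "A \<ge> 0" using \<delta> by (simp add: A_def)
  have Lpos: "\<Lambda>/\<theta> > 0" using \<Lambda>pos theta_pos by simp
  have gd0: "0 \<le> gauss_density (m x) (S x) y" for x y
    by (rule gd_bound(1)[OF S_sym S_psd S_up Lpos S_inv \<delta> \<delta>S])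
  have gd1: "gauss_density (m x) (S x) y \<le> A * exp (- \<beta> * (norm (y - m x))^2)" for x y
  proof -
    have "gauss_density (m x) (S x) y \<le> A * exp (- ((norm (y - m x))^2) / (2 * (\<Lambda>/\<theta>)))"
      unfolding A_def by (rule gd_bound(2)[OF S_sym S_psd S_up Lpos S_inv \<delta> \<delta>S])
    also have "- ((norm (y - m x))^2) / (2 * (\<Lambda>/\<theta>)) = - \<beta> * (norm (y - m x))^2"
      using theta_pos \<Lambda>pos by (simp add: \<beta>_def field_simps)
    finally show ?thesis .
  qed
  define a where "a = 2 * \<alpha> / (\<alpha> + \<beta>)"
  have a: "0 < a" "a < 1" using \<alpha>pos \<alpha>\<beta> by (auto simp: a_def field_simps)
  define \<gamma> where "\<gamma> = (\<beta> - \<alpha>) / 2"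
  have \<gamma>: "\<gamma> > 0" using \<alpha>\<beta> by (simp add: \<gamma>_def)
  define R where "R = B / \<theta>"
  have mx: "norm (m x - x) \<le> R" for x
    using B(1)[of x] theta_pos by (simp add: m_def R_def divide_right_mono)
  define Cst where "Cst = \<alpha> * R^2 / (1 - a)"
  define Ig where "Ig = (\<integral>y. exp (- \<gamma> * (norm y)^2) \<partial>(lborel :: (real^'n) measure))"
  define Mb where "Mb = A * exp Cst * Ig"
  have pw: "gauss_density (m x) (S x) y * exp (\<alpha> * (norm (y - x))^2) \<le> A * exp Cst * exp (- \<gamma> * (norm (y - m x))^2)" for x y
  proof -
    define w where "w = y - m x"
    define e where "e = m x - x"
    have yx: "y - x = w + e" by (simp add: w_def e_def)
    have "(norm (w + e))^2 \<le> (norm w)^2 / a + (norm e)^2 / (1 - a)" by (rule sq_split[OF a])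
    also have "(norm e)^2 / (1 - a) \<le> R^2 / (1 - a)"
      using mx[of x] a by (intro divide_right_mono power_mono) (auto simp: e_def)
    finally have "\<alpha> * (norm (y - x))^2 \<le> \<alpha> * ((norm w)^2 / a + R^2 / (1 - a))"
      using \<alpha>pos yx by (simp add: mult_left_mono)
    also have "\<dots> = (\<beta> - \<gamma>) * (norm w)^2 + Cst"
      using \<alpha>pos \<alpha>\<beta> a by (simp add: a_def \<gamma>_def Cst_def field_simps)
    finally have E: "exp (\<alpha> * (norm (y - x))^2) \<le> exp ((\<beta> - \<gamma>) * (norm w)^2 + Cst)" by simp
    have "gauss_density (m x) (S x) y * exp (\<alpha> * (norm (y - x))^2)
          \<le> (A * exp (- \<beta> * (norm w)^2)) * exp ((\<beta> - \<gamma>) * (norm w)^2 + Cst)"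
      using gd1[of x y] gd0[of x y] E A unfolding w_def by (intro mult_mono) auto
    also have "\<dots> = A * exp Cst * exp (- \<gamma> * (norm w)^2)"
    proof -
      have "exp (- \<beta> * (norm w)^2) * exp ((\<beta> - \<gamma>) * (norm w)^2 + Cst) = exp Cst * exp (- \<gamma> * (norm w)^2)"
        by (simp only: exp_add[symmetric]) (simp add: algebra_simps)
      then show ?thesis by (simp add: mult.assoc)
    qed
    finally show ?thesis by (simp add: w_def)
  qed
  have qk: "q_kernel b C \<theta> x = density lborel (\<lambda>y. ennreal (gauss_density (m x) (S x) y))" for x
    by (simp add: q_kernel_def gauss_measure_def m_def S_def)
  have Emeas: "(\<lambda>y::real^'n. exp (\<alpha> * (norm (y - x))^2)) \<in> borel_measurable lborel" for x
    by measurable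
  have kint: "integrable (q_kernel b C \<theta> x) (\<lambda>y. exp (\<alpha> * (norm (y - x))^2))
      \<and> (\<integral>y. exp (\<alpha> * (norm (y - x))^2) \<partial>(q_kernel b C \<theta> x)) \<le> Mb" for x
  proof -
    have gm: "gauss_density (m x) (S x) \<in> borel_measurable lborel"
      using gd_meas by (simp add: measurable_lborel1)
    have big: "integrable lborel (\<lambda>y. A * exp Cst * exp (- \<gamma> * (norm (y - m x))^2))"
      by (intro integrable_mult_right gauss_integrable(1)[OF \<gamma>])
    have I1: "integrable lborel (\<lambda>y. gauss_density (m x) (S x) y *\<^sub>R exp (\<alpha> * (norm (y - x))^2))"
    proof (rule Bochner_Integration.integrable_bound[OF big])
      show "(\<lambda>y. gauss_density (m x) (S x) y *\<^sub>R exp (\<alpha> * (norm (y - x))^2)) \<in> borel_measurable lborel"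
        using gm Emeas[of x] by measurable
      show "AE y in lborel. norm (gauss_density (m x) (S x) y *\<^sub>R exp (\<alpha> * (norm (y - x))^2))
              \<le> norm (A * exp Cst * exp (- \<gamma> * (norm (y - m x))^2))"
        using pw gd0 A by (intro AE_I2) (simp add: abs_of_nonneg)
    qed
    show ?thesis
    proof
      show "integrable (q_kernel b C \<theta> x) (\<lambda>y. exp (\<alpha> * (norm (y - x))^2))"
        unfolding qk using I1 gm Emeas[of x] gd0 by (subst integrable_density) auto
      have "(\<integral>y. exp (\<alpha> * (norm (y - x))^2) \<partial>(q_kernel b C \<theta> x))
          = (\<integral>y. gauss_density (m x) (S x) y *\<^sub>R exp (\<alpha> * (norm (y - x))^2) \<partial>lborel)"
        unfolding qk using gm Emeas[of x] gd0 by (subst integral_density) auto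
      also have "\<dots> \<le> (\<integral>y. A * exp Cst * exp (- \<gamma> * (norm (y - m x))^2) \<partial>lborel)"
        using pw gd0 A by (intro integral_mono_AE' big AE_I2) auto
      also have "\<dots> = Mb"
        using gauss_integrable(2)[OF \<gamma>, of "m x"] by (simp add: Mb_def Ig_def)
      finally show "(\<integral>y. exp (\<alpha> * (norm (y - x))^2) \<partial>(q_kernel b C \<theta> x)) \<le> Mb" .
    qed
  qed
  define D where "D = (2 * pi * eps_r^2) powr (- real CARD('n) / 2) / (2 * pi * eps_g^2) powr (- real CARD('n) / 2)"
  have D0: "D \<ge> 0" by (simp add: D_def)
  define K where "K = max (2 * \<theta> * D * Mb) (4 * \<theta> * D^2 * Mb)"
  show ?thesis
  proof (intro exI[of _ K] allI impI)
    fix x and \<eta> :: "(real^'n) measure"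
    assume H: "finite_measure \<eta> \<and> sets \<eta> = sets borel"
    then have fin: "finite_measure \<eta>" and sets: "sets \<eta> = sets borel" by auto
    define f where "f = conv_meas (p_gauss (eps_r^2)) \<eta>"
    define g where "g = conv_meas (p_gauss (eps_g^2)) \<eta> x"
    define Q where "Q = q_kernel b C \<theta> x"
    define E where "E y = exp (\<alpha> * (norm (y - x))^2)" for y
    define e where "e y = exp ((norm (y - x))^2 / (2 * (eps_g^2 - eps_r^2)))" for y
    have g0: "g \<ge> 0" unfolding g_def conv_meas_def using eps_g_pos
      by (intro integral_nonneg_AE) (auto simp: pg_nonneg)
    have fy0: "0 \<le> f y" for y
      using conv_bound(1)[OF fin sets sr srg, of y] by (simp add: f_def)
    have fy: "f y \<le> D * e y * g" for y
      using conv_bound(2)[OF fin sets sr srg, of y x] by (simp add: f_def g_def D_def e_def)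
    have e1: "1 \<le> e y" for y using srg by (simp add: e_def)
    have e2: "(e y)^2 = E y" for y
    proof -
      have "(e y)^2 = exp ((norm (y - x))^2 / (2 * (eps_g^2 - eps_r^2)) + (norm (y - x))^2 / (2 * (eps_g^2 - eps_r^2)))"
        by (simp add: e_def power2_eq_square mult_exp_exp)
      also have "\<dots> = E y"
      proof -
        have dd: "eps_g^2 - eps_r^2 \<noteq> 0" using srg by simp
        have "\<And>t dd::real. dd \<noteq> 0 \<Longrightarrow> t / (2 * dd) + t / (2 * dd) = 1 / dd * t"
          by (simp add: field_simps)
        from this[OF dd] show ?thesis unfolding E_def \<alpha>_def by simp
      qed
      finally show ?thesis .
    qed
    have fx: "f x \<le> D * g" using fy[of x] by (simp add: e_def)
    have Dg: "D * g \<ge> 0" using D0 g0 by simp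
    have sumb: "f y + f x \<le> 2 * D * g * e y" for y
    proof -
      have "D * g * 1 \<le> D * g * e y" by (rule mult_left_mono[OF e1 Dg])
      then have "f x \<le> D * g * e y" using fx by linarith
      then show ?thesis using fy[of y] by (simp add: algebra_simps)
    qed
    have ee: "e y \<le> E y" for y
    proof -
      have "e y * 1 \<le> e y * e y" using e1[of y] by (intro mult_left_mono) auto
      then show ?thesis using e2[of y] by (simp add: power2_eq_square)
    qed
    have b1: "\<bar>f y - f x\<bar> \<le> 2 * D * g * E y" for y
    proof -
      have "\<bar>f y - f x\<bar> \<le> f y + f x" using fy0[of y] fy0[of x] by linarith
      also have "\<dots> \<le> 2 * D * g * e y" by (rule sumb)
      also have "\<dots> \<le> 2 * D * g * E y" using Dg ee[of y] by (intro mult_left_mono) auto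
      finally show ?thesis .
    qed
    have b2: "(f y - f x)^2 \<le> 4 * D^2 * g^2 * E y" for y
    proof -
      have ab: "\<bar>f y - f x\<bar> \<le> f y + f x" using fy0[of y] fy0[of x] by linarith
      have "\<bar>f y - f x\<bar>^2 \<le> (f y + f x)^2" by (intro power_mono ab) auto
      then have "(f y - f x)^2 \<le> (f y + f x)^2" by simp
      also have "\<dots> \<le> (2 * D * g * e y)^2"
        using fy0[of y] fy0[of x] sumb[of y] by (intro power_mono) auto
      also have "\<dots> = 4 * D^2 * g^2 * E y" by (simp add: e2[symmetric] power_mult_distrib)
      finally show ?thesis .
    qed
    have KI: "integrable Q E" and KB: "(\<integral>y. E y \<partial>Q) \<le> Mb"
      using kint[of x] by (simp_all add: Q_def E_def[abs_def])
    have E0: "0 \<le> E y" for y by (simp add: E_def)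
    have I1: "(\<integral>y. \<bar>f y - f x\<bar> \<partial>Q) \<le> (\<integral>y. 2 * D * g * E y \<partial>Q)"
      using b1 Dg E0 by (intro integral_mono_AE' integrable_mult_right KI AE_I2) auto
    have I2: "(\<integral>y. (f y - f x)^2 \<partial>Q) \<le> (\<integral>y. 4 * D^2 * g^2 * E y \<partial>Q)"
      using b2 Dg E0 by (intro integral_mono_AE' integrable_mult_right KI AE_I2) auto
    have P1: "\<bar>\<theta> * (\<integral>y. f y - f x \<partial>Q)\<bar> \<le> K * g"
    proof -
      have "\<bar>\<theta> * (\<integral>y. f y - f x \<partial>Q)\<bar> = \<theta> * \<bar>\<integral>y. f y - f x \<partial>Q\<bar>"
        using theta_pos by (simp add: abs_mult)
      also have "\<dots> \<le> \<theta> * (\<integral>y. \<bar>f y - f x\<bar> \<partial>Q)"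
        using integral_norm_bound[of Q "\<lambda>y. f y - f x"] theta_pos by (intro mult_left_mono) auto
      also have "\<dots> \<le> \<theta> * (2 * D * g * (\<integral>y. E y \<partial>Q))"
        using I1 theta_pos by (intro mult_left_mono) auto
      also have "\<dots> \<le> \<theta> * (2 * D * g * Mb)"
        using KB Dg theta_pos by (intro mult_left_mono) auto
      also have "\<dots> = (2 * \<theta> * D * Mb) * g" by simp
      also have "\<dots> \<le> K * g" unfolding K_def by (intro mult_right_mono g0) simp
      finally show ?thesis .
    qed
    have P2: "\<theta> * (\<integral>y. (f y - f x)^2 \<partial>Q) \<le> K * g^2"
    proof -
      have "\<theta> * (\<integral>y. (f y - f x)^2 \<partial>Q) \<le> \<theta> * (4 * D^2 * g^2 * (\<integral>y. E y \<partial>Q))"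
        using I2 theta_pos by (intro mult_left_mono) auto
      also have "\<dots> \<le> \<theta> * (4 * D^2 * g^2 * Mb)"
        using KB theta_pos by (intro mult_left_mono) auto
      also have "\<dots> = (4 * \<theta> * D^2 * Mb) * g^2" by simp
      also have "\<dots> \<le> K * g^2" unfolding K_def by (intro mult_right_mono) auto
      finally show ?thesis .
    qed
    show "\<bar>\<theta> * (\<integral>y. conv_meas (p_gauss (eps_r^2)) \<eta> y - conv_meas (p_gauss (eps_r^2)) \<eta> x
                     \<partial>(q_kernel b C \<theta> x))\<bar>
              \<le> K * conv_meas (p_gauss (eps_g^2)) \<eta> x
         \<and> \<theta> * (\<integral>y. (conv_meas (p_gauss (eps_r^2)) \<eta> y - conv_meas (p_gauss (eps_r^2)) \<eta> x)^2
                     \<partial>(q_kernel b C \<theta> x))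
              \<le> K * (conv_meas (p_gauss (eps_g^2)) \<eta> x)^2"
      using P1 P2 unfolding f_def g_def Q_def by blast
  qed
qed

end
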